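(* Let $V$ be a commutative unital quantale whose underlying lattice is a frame. A $V$-homomorphism $f\colon(X,a,+)\to(Y,b,+)$ between $V$-groups is open if and only if it is proper.
   Context: A commutative unital quantale $V$ is a complete lattice with a commutative associative operation $\otimes$ with unit $k$ preserving arbitrary joins in each variable. A $V$-category $(X,a)$: $a\colon X\times X\to V$ with $k\le a(x,x)$ and $a(x,x')\otimes a(x',x'')\le a(x,x'')$. A $V$-group $(X,a,+)$ is a $V$-category with a group structure (additive, not necessarily abelian) such that $a(x_1,x_2)\otimes a(x_1',x_2')\le a(x_1+x_1',x_2+x_2')$; a $V$-homomorphism is a group homomorphism with $a(x,x')\le b(f(x),f(x'))$. A $V$-functor $f\colon(X,a)\to(Y,b)$ is proper if $b(f(x),y)=\bigvee\{a(x,x')\mid x'\in X,\ f(x')=y\}$ for all $x\in X$, $y\in Y$, and open if $b(y,f(x))=\bigvee\{a(x',x)\mid x'\in X,\ f(x')=y\}$ for all $x\in X$, $y\in Y$ (empty joins being $\bot$). *)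

theory Defs
  imports Main
begin

definition comm_unital_quantale :: "('v::complete_lattice \<Rightarrow> 'v \<Rightarrow> 'v) \<Rightarrow> 'v \<Rightarrow> bool" where
  "comm_unital_quantale tn k \<longleftrightarrow>
     (\<forall>u v w. tn (tn u v) w = tn u (tn v w)) \<and>
     (\<forall>u v. tn u v = tn v u) \<and>
     (\<forall>u. tn k u = u \<and> tn u k = u) \<and>
     (\<forall>u S. tn u (Sup S) = Sup ((\<lambda>s. tn u s) ` S)) \<and>
     (\<forall>u S. tn (Sup S) u = Sup ((\<lambda>s. tn s u) ` S))"

definition is_frame :: "'v::complete_lattice itself \<Rightarrow> bool" where
  "is_frame _ \<longleftrightarrow> (\<forall>(u::'v) S. inf u (Sup S) = Sup ((\<lambda>s. inf u s) ` S))"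

definition V_category :: "('v::complete_lattice \<Rightarrow> 'v \<Rightarrow> 'v) \<Rightarrow> 'v \<Rightarrow> ('x \<Rightarrow> 'x \<Rightarrow> 'v) \<Rightarrow> bool" where
  "V_category tn k a \<longleftrightarrow>
     (\<forall>x. k \<le> a x x) \<and> (\<forall>x x' x''. tn (a x x') (a x' x'') \<le> a x x'')"

text \<open>A V-group: the group structure is the (not necessarily abelian) additive group of the type 'x.\<close>
definition V_group :: "('v::complete_lattice \<Rightarrow> 'v \<Rightarrow> 'v) \<Rightarrow> 'v \<Rightarrow> ('x::group_add \<Rightarrow> 'x \<Rightarrow> 'v) \<Rightarrow> bool" where
  "V_group tn k a \<longleftrightarrow> V_category tn k a \<and>
     (\<forall>x1 x2 x1' x2'. tn (a x1 x2) (a x1' x2') \<le> a (x1 + x1') (x2 + x2'))"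

definition V_homomorphism ::
  "('x::group_add \<Rightarrow> 'x \<Rightarrow> 'v::complete_lattice) \<Rightarrow> ('y::group_add \<Rightarrow> 'y \<Rightarrow> 'v) \<Rightarrow> ('x \<Rightarrow> 'y) \<Rightarrow> bool" where
  "V_homomorphism a b f \<longleftrightarrow>
     (\<forall>x x'. f (x + x') = f x + f x') \<and> (\<forall>x x'. a x x' \<le> b (f x) (f x'))"

definition V_proper :: "('x \<Rightarrow> 'x \<Rightarrow> 'v::complete_lattice) \<Rightarrow> ('y \<Rightarrow> 'y \<Rightarrow> 'v) \<Rightarrow> ('x \<Rightarrow> 'y) \<Rightarrow> bool" where
  "V_proper a b f \<longleftrightarrow> (\<forall>x y. b (f x) y = Sup {a x x' | x'. f x' = y})"

definition V_open :: "('x \<Rightarrow> 'x \<Rightarrow> 'v::complete_lattice) \<Rightarrow> ('y \<Rightarrow> 'y \<Rightarrow> 'v) \<Rightarrow> ('x \<Rightarrow> 'y) \<Rightarrow> bool" where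
  "V_open a b f \<longleftrightarrow> (\<forall>x y. b y (f x) = Sup {a x' x | x'. f x' = y})"

end

theory Submission
  imports Defs
begin

lemma tn_mono:
  assumes q: "comm_unital_quantale tn k" and "u \<le> u'" and "v \<le> v'"
  shows "tn u v \<le> tn u' v'"
proof -
  have L: "tn u v \<le> tn u v'" if "v \<le> v'" for u v v'
  proof -
    have "tn u (Sup {v, v'}) = Sup ((\<lambda>s. tn u s) ` {v, v'})"
      using q unfolding comm_unital_quantale_def by blast
    moreover have "Sup {v, v'} = v'" using that by (simp add: sup_absorb2)
    ultimately show ?thesis by (metis Sup_upper image_insert insertI1)
  qed
  have C: "tn u v = tn v u" for u v using q unfolding comm_unital_quantale_def by blast
  show ?thesis using L[OF assms(2), of v] L[OF assms(3), of u'] C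
    by (metis order_trans)
qed

lemma Vgroup_inv:
  assumes q: "comm_unital_quantale tn k" and g: "V_group tn k a"
  shows "a x x' \<le> a (- x') (- (x::'x::group_add))"
proof -
  have ku: "tn k u = u" "tn u k = u" for u using q unfolding comm_unital_quantale_def by auto
  have refl: "k \<le> a z z" for z using g unfolding V_group_def V_category_def by blast
  have add: "tn (a x1 x2) (a x1' x2') \<le> a (x1 + x1') (x2 + x2')" for x1 x2 x1' x2'
    using g unfolding V_group_def by blast
  have "a x x' = tn (tn k (a x x')) k" using ku by simp
  also have "\<dots> \<le> tn (tn (a (-x) (-x)) (a x x')) (a (-x') (-x'))"
    using tn_mono[OF q] refl by (meson order_refl)
  also have "\<dots> \<le> tn (a (-x + x) (-x + x')) (a (-x') (-x'))"
    using tn_mono[OF q] add by (meson order_refl)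
  also have "\<dots> \<le> a (-x + x + -x') (-x + x' + -x')" using add by blast
  also have "-x + x' + -x' = -x" by (simp add: add.assoc)
  also have "-x + x + -x' = -x'" by simp
  finally show ?thesis .
qed

lemma Vgroup_inv_eq:
  assumes q: "comm_unital_quantale tn k" and g: "V_group tn k a"
  shows "a x x' = a (- x') (- (x::'x::group_add))"
proof (rule antisym)
  show "a x x' \<le> a (- x') (- x)" by (rule Vgroup_inv[OF q g])
  have "a (- x') (- x) \<le> a (- (- x)) (- (- x'))" by (rule Vgroup_inv[OF q g])
  then show "a (- x') (- x) \<le> a x x'" by (simp only: minus_minus)
qed

lemma hom_neg:
  fixes f :: "'x::group_add \<Rightarrow> 'y::group_add"
  assumes "\<forall>x x'. f (x + x') = f x + f x'"
  shows "f (- x) = - f x"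
proof -
  have "f 0 = f (0 + 0)" by simp
  also have "\<dots> = f 0 + f 0" using assms by blast
  finally have "f 0 + 0 = f 0 + f 0" by simp
  hence z: "f 0 = 0" by (simp only: add_left_cancel)
  have h: "f (-x + x) = f (-x) + f x" using assms by blast
  have "f (-x) + f x = f (-x + x)" using h by simp
  also have "\<dots> = 0" using z by simp
  finally have "f (-x) + f x = 0" .
  thus ?thesis by (simp add: eq_neg_iff_add_eq_0)
qed

theorem proposition5p5:
  fixes tn :: "'v::complete_lattice \<Rightarrow> 'v \<Rightarrow> 'v" and k :: 'v
    and a :: "'x::group_add \<Rightarrow> 'x \<Rightarrow> 'v" and b :: "'y::group_add \<Rightarrow> 'y \<Rightarrow> 'v"
    and f :: "'x \<Rightarrow> 'y"
  assumes "comm_unital_quantale tn k"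
    and "is_frame TYPE('v)"
    and "V_group tn k a" and "V_group tn k b"
    and "V_homomorphism a b f"
  shows "V_open a b f \<longleftrightarrow> V_proper a b f"
proof -
  have ia: "\<And>x x'. a x x' = a (- x') (- x)" using Vgroup_inv_eq[OF assms(1) assms(3)] .
  have ib: "\<And>x x'. b x x' = b (- x') (- x)" using Vgroup_inv_eq[OF assms(1) assms(4)] .
  have fn: "\<And>x. f (- x) = - f x" using hom_neg assms(5) unfolding V_homomorphism_def by blast
  have S1: "{a x' (- x) | x'. f x' = - y} = {a x z | z. f z = y}" for x y
  proof -
    have "{a x' (- x) | x'. f x' = - y} = (\<lambda>z. a x z) ` {z. f z = y}"
    proof (intro set_eqI iffI)
      fix t assume "t \<in> {a x' (- x) | x'. f x' = - y}"
      then obtain x' where "t = a x' (-x)" "f x' = -y" by blast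
      then show "t \<in> (\<lambda>z. a x z) ` {z. f z = y}"
        using ia[of x "-x'"] fn[of x'] by (intro image_eqI[of _ _ "-x'"]) auto
    next
      fix t assume "t \<in> (\<lambda>z. a x z) ` {z. f z = y}"
      then obtain z where "t = a x z" "f z = y" by blast
      then show "t \<in> {a x' (- x) | x'. f x' = - y}"
        using ia[of x z] fn[of z] by (intro CollectI exI[of _ "-z"]) auto
    qed
    thus ?thesis by blast
  qed
  have S2: "{a (- x') x | x'. f x' = - y} = {a z x | z. f z = y}" for x y
  proof -
    have "{a (- x') x | x'. f x' = - y} = (\<lambda>z. a z x) ` {z. f z = y}"
    proof (intro set_eqI iffI)
      fix t assume "t \<in> {a (- x') x | x'. f x' = - y}"
      then obtain x' where "t = a (-x') x" "f x' = -y" by blast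
      then show "t \<in> (\<lambda>z. a z x) ` {z. f z = y}"
        using fn[of x'] by (intro image_eqI[of _ _ "-x'"]) auto
    next
      fix t assume "t \<in> (\<lambda>z. a z x) ` {z. f z = y}"
      then obtain z where "t = a z x" "f z = y" by blast
      then show "t \<in> {a (- x') x | x'. f x' = - y}"
        using fn[of z] by (intro CollectI exI[of _ "-z"]) auto
    qed
    thus ?thesis by blast
  qed
  show ?thesis
  proof
    assume o: "V_open a b f"
    show "V_proper a b f" unfolding V_proper_def
    proof (intro allI)
      fix x y
      have "b (f x) y = b (-y) (f (-x))" using ib[of "f x" y] fn[of x] by simp
      also have "\<dots> = Sup {a x' (- x) | x'. f x' = - y}" using o unfolding V_open_def by blast
      finally show "b (f x) y = Sup {a x x' | x'. f x' = y}" using S1 by simp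
    qed
  next
    assume p: "V_proper a b f"
    show "V_open a b f" unfolding V_open_def
    proof (intro allI)
      fix x y
      have "b y (f x) = b (f (-x)) (-y)" using ib[of y "f x"] fn[of x] by simp
      also have "\<dots> = Sup {a (- x) x' | x'. f x' = - y}" using p unfolding V_proper_def by blast
      also have "{a (- x) x' | x'. f x' = - y} = {a (- x') x | x'. f x' = - y}"
        by (simp only: ia[of "-x"] minus_minus)
      finally show "b y (f x) = Sup {a x' x | x'. f x' = y}" using S2 by simp
    qed
  qed
qed

end
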